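(* Let $\lambda=(\lambda_1,\ldots,\lambda_n)\in\mathbb{C}^n$ have pairwise distinct entries. Then for every $l\in\{1,\ldots,n\}$, every $k\in\{0,\ldots,n-1\}$ and every $t$, $$\dot\nu_{k,\lambda}(t)=\lambda_l\,\nu_{k,\lambda}(t)-\lambda_l\,\nu_{k,\lambda_{\neg l}}(t)+\nu_{k-1,\lambda_{\neg l}}(t),$$ where $\lambda_{\neg l}=(\lambda_1,\ldots,\lambda_{l-1},\lambda_{l+1},\ldots,\lambda_n)$.
   Context: For a tuple $\mu=(\mu_1,\ldots,\mu_p)$ of distinct complex numbers, $V_\mu$ is the $p\times p$ Vandermonde matrix with $(i,j)$ entry $\mu_j^{i-1}$ and the Vandermonde basis functions are defined by $[\nu_{0,\mu}(t),\ldots,\nu_{p-1,\mu}(t)]=[e^{\mu_1 t},\ldots,e^{\mu_p t}]V_\mu^{-1}$; by convention $\nu_{k,\mu}(t)=0$ for $k<0$ and for $k\ge p$ (in particular all $\nu_{k,\mu}\equiv 0$ when $\mu$ is empty). *)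

theory Defs
  imports "HOL-Analysis.Analysis" "Jordan_Normal_Form.Matrix"
begin

definition vandermonde :: "complex list \<Rightarrow> complex mat" where
  "vandermonde mu = mat (length mu) (length mu) (\<lambda>(i,j). (mu ! j) ^ i)"

text \<open>The inverse of the Vandermonde matrix (it exists when the entries are distinct).\<close>
definition vandermonde_inv :: "complex list \<Rightarrow> complex mat" where
  "vandermonde_inv mu = (SOME B. B \<in> carrier_mat (length mu) (length mu) \<and>
      B * vandermonde mu = 1\<^sub>m (length mu) \<and> vandermonde mu * B = 1\<^sub>m (length mu))"

text \<open>Vandermonde basis functions:
  [nu_0(t),...,nu_{p-1}(t)] = [e^{mu_1 t},...,e^{mu_p t}] V_mu^{-1};
  nu_k = 0 for k < 0 and k >= p. Index k is an integer.\<close>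
definition vbasis :: "int \<Rightarrow> complex list \<Rightarrow> real \<Rightarrow> complex" where
  "vbasis k mu t = (if 0 \<le> k \<and> k < int (length mu)
     then (\<Sum>j<length mu. exp (mu ! j * complex_of_real t) * vandermonde_inv mu $$ (j, nat k))
     else 0)"

end

theory Submission imports Defs "HOL-Computational_Algebra.Polynomial" "Jordan_Normal_Form.Determinant" begin

lemma poly_sum_lt:
  fixes q :: "complex poly"
  assumes "degree q < p"
  shows "poly q x = (\<Sum>k<p. coeff q k * x ^ k)"
proof -
  have "poly q x = (\<Sum>k\<le>degree q. coeff q k * x ^ k)" by (rule poly_altdef)
  also have "\<dots> = (\<Sum>k<p. coeff q k * x ^ k)"
    by (rule sum.mono_neutral_left) (use assms in \<open>auto simp: coeff_eq_0\<close>)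
  finally show ?thesis .
qed

lemma distinct_nth_eq: "distinct mu \<Longrightarrow> i < length mu \<Longrightarrow> j < length mu \<Longrightarrow> (mu ! i = mu ! j) = (i = j)"
  by (simp add: nth_eq_iff_index_eq)

lemma vandermonde_inv_exists:
  assumes d: "distinct mu"
  shows "\<exists>B. B \<in> carrier_mat (length mu) (length mu) \<and>
      B * vandermonde mu = 1\<^sub>m (length mu) \<and> vandermonde mu * B = 1\<^sub>m (length mu)"
proof -
  define p where "p = length mu"
  define L where "L j = Polynomial.smult (inverse (\<Prod>i\<in>{..<p}-{j}. mu!j - mu!i)) (\<Prod>i\<in>{..<p}-{j}. [:-(mu!i),1:])" for j
  define B where "B = mat p p (\<lambda>(j,k). coeff (L j) k)"
  have degL: "degree (L j) < p" if "j < p" for j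
  proof -
    have "degree (L j) \<le> degree (\<Prod>i\<in>{..<p}-{j}. [:-(mu!i),1:])" unfolding L_def by (rule degree_smult_le)
    also have "\<dots> \<le> (\<Sum>i\<in>{..<p}-{j}. degree [:-(mu!i),1:])" using degree_prod_sum_le[of "{..<p}-{j}" "\<lambda>i. [:-(mu!i),1:]"] by (simp add: o_def)
    also have "\<dots> = card ({..<p}-{j})" by simp
    also have "\<dots> < p" using that by (simp add: card_Diff_singleton)
    finally show ?thesis .
  qed
  have polyL: "poly (L j) (mu!m) = (if j = m then 1 else 0)" if "j < p" "m < p" for j m
  proof (cases "j = m")
    case True
    have "(\<Prod>i\<in>{..<p}-{j}. mu!j - mu!i) \<noteq> 0"
      using d that unfolding p_def by (auto simp: distinct_nth_eq)
    then show ?thesis using True by (simp add: L_def poly_prod)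
  next
    case False
    have "(\<Prod>i\<in>{..<p}-{j}. mu!m - mu!i) = 0"
      by (rule prod_zero) (use False that in auto)
    then show ?thesis using False by (simp add: L_def poly_prod)
  qed
  have BV: "B * vandermonde mu = 1\<^sub>m p"
  proof (rule eq_matI)
    fix j m assume jm: "j < dim_row (1\<^sub>m p)" "m < dim_col (1\<^sub>m p)"
    have "(B * vandermonde mu) $$ (j, m) = (\<Sum>k<p. coeff (L j) k * (mu!m)^k)"
      using jm by (simp add: B_def vandermonde_def p_def scalar_prod_def atLeast0LessThan)
    also have "\<dots> = poly (L j) (mu!m)" using degL jm by (simp add: poly_sum_lt[of _ p])
    also have "\<dots> = 1\<^sub>m p $$ (j, m)" using polyL jm by simp
    finally show "(B * vandermonde mu) $$ (j, m) = 1\<^sub>m p $$ (j, m)" .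
  qed (simp_all add: B_def vandermonde_def p_def)
  have Bc: "B \<in> carrier_mat p p" by (simp add: B_def)
  have Vc: "vandermonde mu \<in> carrier_mat p p" by (simp add: vandermonde_def p_def)
  have "vandermonde mu * B = 1\<^sub>m p" by (rule mat_mult_left_right_inverse[OF Bc Vc BV])
  then show ?thesis using Bc BV unfolding p_def by blast
qed

abbreviation W where "W mu \<equiv> vandermonde_inv mu"

lemma W_props:
  assumes "distinct mu"
  shows "W mu \<in> carrier_mat (length mu) (length mu) \<and>
      W mu * vandermonde mu = 1\<^sub>m (length mu) \<and> vandermonde mu * W mu = 1\<^sub>m (length mu)"
  unfolding vandermonde_inv_def by (rule someI_ex[OF vandermonde_inv_exists[OF assms]])

lemma WV_entry:
  assumes "distinct mu" "j < length mu" "m < length mu"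
  shows "(\<Sum>k<length mu. W mu $$ (j,k) * (mu!m)^k) = (if j = m then 1 else 0)"
proof -
  have P: "W mu \<in> carrier_mat (length mu) (length mu)" "W mu * vandermonde mu = 1\<^sub>m (length mu)"
    using W_props[OF assms(1)] by auto
  have "(W mu * vandermonde mu) $$ (j,m) = 1\<^sub>m (length mu) $$ (j,m)" using P by simp
  then show ?thesis using P assms
    by (simp add: vandermonde_def scalar_prod_def atLeast0LessThan index_mult_mat)
qed

lemma VW_entry:
  assumes "distinct mu" "i < length mu" "k < length mu"
  shows "(\<Sum>m<length mu. (mu!m)^i * W mu $$ (m,k)) = (if i = k then 1 else 0)"
proof -
  have P: "W mu \<in> carrier_mat (length mu) (length mu)" "vandermonde mu * W mu = 1\<^sub>m (length mu)"
    using W_props[OF assms(1)] by auto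
  have "(vandermonde mu * W mu) $$ (i,k) = 1\<^sub>m (length mu) $$ (i,k)" using P by simp
  then show ?thesis using P assms
    by (simp add: vandermonde_def scalar_prod_def atLeast0LessThan index_mult_mat)
qed

lemma W_uniq:
  assumes d: "distinct mu" and j: "j < length mu" and k: "k < length mu"
    and c: "\<And>m. m < length mu \<Longrightarrow> (\<Sum>i<length mu. c i * (mu!m)^i) = (if j = m then 1 else 0)"
  shows "c k = W mu $$ (j,k)"
proof -
  let ?p = "length mu"
  have "c k = (\<Sum>i<?p. c i * (if i = k then 1 else 0))" using k by (simp add: if_distrib cong: if_cong)
  also have "\<dots> = (\<Sum>i<?p. c i * (\<Sum>m<?p. (mu!m)^i * W mu $$ (m,k)))"
    by (rule sum.cong) (use VW_entry[OF d _ k] in auto)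
  also have "\<dots> = (\<Sum>m<?p. W mu $$ (m,k) * (\<Sum>i<?p. c i * (mu!m)^i))"
  proof -
    have "(\<Sum>i<?p. c i * (\<Sum>m<?p. (mu!m)^i * W mu $$ (m,k))) = (\<Sum>i<?p. \<Sum>m<?p. W mu $$ (m,k) * (c i * (mu!m)^i))"
      by (simp add: sum_distrib_left mult_ac)
    also have "\<dots> = (\<Sum>m<?p. \<Sum>i<?p. W mu $$ (m,k) * (c i * (mu!m)^i))" by (rule sum.swap)
    also have "\<dots> = (\<Sum>m<?p. W mu $$ (m,k) * (\<Sum>i<?p. c i * (mu!m)^i))" by (simp add: sum_distrib_left)
    finally show ?thesis .
  qed
  also have "\<dots> = (\<Sum>m<?p. W mu $$ (m,k) * (if j = m then 1 else 0))"
    by (rule sum.cong) (use c in auto)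
  also have "\<dots> = W mu $$ (j,k)" using j by (simp add: if_distrib cong: if_cong)
  finally show ?thesis .
qed

definition Wc where "Wc mu a (k::int) = (if 0 \<le> k \<and> k < int (length mu) then W mu $$ (a, nat k) else 0)"

lemma vbasis_alt: "vbasis k mu t = (\<Sum>j<length mu. exp (mu!j * complex_of_real t) * Wc mu j k)"
  by (auto simp: vbasis_def Wc_def)

lemma sum_Wc_shift0:
  assumes "0 < length mu" "length mu' = length mu - 1"
  shows "(\<Sum>k<length mu. Wc mu' a (int k) * x^k) = (\<Sum>k<length mu'. W mu' $$ (a,k) * x^k)"
proof -
  have "length mu = Suc (length mu')" using assms by simp
  then show ?thesis by (simp add: Wc_def)
qed

lemma sum_Wc_shift1:
  assumes "0 < length mu" "length mu' = length mu - 1"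
  shows "(\<Sum>k<length mu. Wc mu' a (int k - 1) * x^k) = x * (\<Sum>k<length mu'. W mu' $$ (a,k) * x^k)"
proof -
  have e: "length mu = Suc (length mu')" using assms by simp
  have "(\<Sum>k<length mu. Wc mu' a (int k - 1) * x^k) = Wc mu' a (int 0 - 1) * x^0 + (\<Sum>k<length mu'. Wc mu' a (int (Suc k) - 1) * x^(Suc k))"
    unfolding e by (rule sum.lessThan_Suc_shift)
  also have "\<dots> = (\<Sum>k<length mu'. W mu' $$ (a,k) * x^(Suc k))"
    by (auto simp: Wc_def intro!: sum.cong)
  also have "\<dots> = x * (\<Sum>k<length mu'. W mu' $$ (a,k) * x^k)"
    by (simp add: sum_distrib_left mult_ac)
  finally show ?thesis .
qed

lemma key:
  fixes lam :: "complex list" and l j' :: nat and k :: int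
  defines "lam' \<equiv> take l lam @ drop (Suc l) lam"
  defines "f \<equiv> \<lambda>i::nat. if i < l then i else Suc i"
  assumes d: "distinct lam" and l: "l < length lam" and j': "j' < length lam - 1"
    and k0: "0 \<le> k" and kn: "k < int (length lam)"
  shows "(lam!(f j') - lam!l) * W lam $$ (f j', nat k) = Wc lam' j' (k-1) - lam!l * Wc lam' j' k"
proof -
  let ?n = "length lam"
  have len: "length lam' = ?n - 1" using l by (simp add: lam'_def)
  have nth': "lam' ! i = lam ! f i" if "i < ?n - 1" for i
    using that l by (auto simp: lam'_def f_def nth_append min_def)
  have "distinct (take l lam @ lam!l # drop (Suc l) lam)" using d by (simp add: Cons_nth_drop_Suc[OF l])
  then have d': "distinct lam'" unfolding lam'_def by auto
  have fj: "f j' < ?n" "f j' \<noteq> l" using j' by (auto simp: f_def)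
  have ne: "lam!(f j') \<noteq> lam!l" using fj d l by (simp add: distinct_nth_eq)
  define S where "S x = (\<Sum>k<length lam'. W lam' $$ (j',k) * x^k)" for x
  define c where "c kk = (Wc lam' j' (int kk - 1) - lam!l * Wc lam' j' (int kk)) / (lam!(f j') - lam!l)" for kk
  have n0: "0 < ?n" using l by (cases lam) auto
  have csum: "(\<Sum>kk<?n. c kk * x^kk) = (x - lam!l) * S x / (lam!(f j') - lam!l)" for x
  proof -
    have "(\<Sum>kk<?n. c kk * x^kk) = ((\<Sum>kk<?n. Wc lam' j' (int kk - 1) * x^kk) - lam!l * (\<Sum>kk<?n. Wc lam' j' (int kk) * x^kk)) / (lam!(f j') - lam!l)"
      unfolding c_def sum_distrib_left sum_subtractf[symmetric] sum_divide_distrib by (rule sum.cong) (auto simp: algebra_simps)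
    also have "\<dots> = (x - lam!l) * S x / (lam!(f j') - lam!l)"
      using sum_Wc_shift0[OF n0 len] sum_Wc_shift1[OF n0 len] by (simp add: S_def algebra_simps)
    finally show ?thesis .
  qed
  have cprop: "(\<Sum>kk<?n. c kk * (lam!m)^kk) = (if f j' = m then 1 else 0)" if m: "m < ?n" for m
  proof (cases "m = l")
    case True
    then show ?thesis using csum fj by simp
  next
    case False
    define m' where "m' = (if m < l then m else m - 1)"
    have m': "m' < ?n - 1" "f m' = m" using False m l unfolding m'_def f_def by auto
    have "S (lam!m) = (if j' = m' then 1 else 0)"
      using WV_entry[OF d', of j' m'] j' m' len nth'[of m'] by (simp add: S_def)
    moreover have "(j' = m') = (f j' = m)" unfolding m'(2)[symmetric] f_def by (auto split: if_splits)
    ultimately show ?thesis using csum ne by auto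
  qed
  have "c (nat k) = W lam $$ (f j', nat k)"
    by (rule W_uniq[OF d fj(1)]) (use cprop kn k0 in auto)
  then show ?thesis using ne k0 by (simp add: c_def field_simps)
qed

lemma exp_deriv: "((\<lambda>s. exp (c * complex_of_real s) * a) has_vector_derivative (c * exp (c * complex_of_real t) * a)) (at t)"
proof -
  have "((\<lambda>s. exp (s *\<^sub>R c)) has_vector_derivative exp (t *\<^sub>R c) * c) (at t)"
    by (rule exp_scaleR_has_vector_derivative_right)
  then have "((\<lambda>s. exp (c * complex_of_real s)) has_vector_derivative c * exp (c * complex_of_real t)) (at t)"
    by (simp add: scaleR_conv_of_real mult.commute)
  then show ?thesis by (rule has_vector_derivative_mult_left)
qed

theorem proposition5:
  fixes lam :: "complex list" and l :: nat and k :: int and t :: real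
  assumes "distinct lam"
    and "l < length lam"
    and "0 \<le> k" and "k < int (length lam)"
  shows "((\<lambda>s. vbasis k lam s) has_vector_derivative
           (lam ! l * vbasis k lam t - lam ! l * vbasis k (take l lam @ drop (Suc l) lam) t
            + vbasis (k - 1) (take l lam @ drop (Suc l) lam) t)) (at t)"
proof -
  note d = assms(1) and l = assms(2) and k0 = assms(3) and kn = assms(4)
  define lam' where "lam' = take l lam @ drop (Suc l) lam"
  define f where "f = (\<lambda>i::nat. if i < l then i else Suc i)"
  let ?n = "length lam"
  define e where "e j = exp (lam!j * complex_of_real t)" for j
  define g where "g j = e j * ((lam!j - lam!l) * W lam $$ (j, nat k))" for j
  have len: "length lam' = ?n - 1" using l by (simp add: lam'_def)
  have nth': "lam' ! i = lam ! f i" if "i < ?n - 1" for i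
    using that l by (auto simp: lam'_def f_def nth_append min_def)
  have vb: "vbasis k lam s = (\<Sum>j<?n. exp (lam!j * complex_of_real s) * W lam $$ (j, nat k))" for s
    using k0 kn by (simp add: vbasis_def)
  have D: "((\<lambda>s. vbasis k lam s) has_vector_derivative (\<Sum>j<?n. lam!j * e j * W lam $$ (j, nat k))) (at t)"
    unfolding vb e_def by (rule has_vector_derivative_sum) (rule exp_deriv)
  have "vbasis (k - 1) lam' t - lam ! l * vbasis k lam' t
      = (\<Sum>j'<?n-1. e (f j') * (Wc lam' j' (k-1) - lam!l * Wc lam' j' k))"
    by (simp add: vbasis_alt len nth' e_def sum_distrib_left sum_subtractf[symmetric] algebra_simps)
  also have "\<dots> = (\<Sum>j'<?n-1. g (f j'))"
    by (rule sum.cong) (use key[OF d l _ k0 kn] in \<open>auto simp: g_def lam'_def f_def\<close>)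
  also have "\<dots> = sum g (f ` {..<?n-1})"
    by (rule sum.reindex[symmetric, unfolded o_def]) (auto simp: inj_on_def f_def split: if_splits)
  also have "f ` {..<?n-1} = {..<?n} - {l}"
  proof
    show "f ` {..<?n-1} \<subseteq> {..<?n} - {l}" using l by (auto simp: f_def)
    show "{..<?n} - {l} \<subseteq> f ` {..<?n-1}"
    proof
      fix x assume x: "x \<in> {..<?n} - {l}"
      then have "x = f (if x < l then x else x - 1)" "(if x < l then x else x - 1) < ?n - 1"
        using l by (auto simp: f_def)
      then show "x \<in> f ` {..<?n-1}" by blast
    qed
  qed
  also have "sum g ({..<?n} - {l}) = sum g {..<?n}"
    by (rule sum.mono_neutral_left) (auto simp: g_def)
  finally have E: "vbasis (k - 1) lam' t - lam ! l * vbasis k lam' t = sum g {..<?n}" .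
  have "(\<Sum>j<?n. lam!j * e j * W lam $$ (j, nat k)) = lam!l * vbasis k lam t + sum g {..<?n}"
    by (simp add: vb e_def g_def sum_distrib_left sum.distrib[symmetric] algebra_simps)
  also have "\<dots> = lam ! l * vbasis k lam t - lam ! l * vbasis k lam' t + vbasis (k - 1) lam' t"
    using E by (simp add: algebra_simps)
  finally show ?thesis using D unfolding lam'_def by simp
qed

end
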